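(* Let $n, m \in \mathbb{N}$. Then $\chi_{\star,m}(G_n^\infty) = n+1$ and $\widehat{K}_{\star,m}(G_n^\infty) \le n!\, m^n$.
   Context: Let $G$ be a graph with vertex set $V$, with the graph (shortest path) distance, and let $n, m \in \mathbb{N}$. A function $f \colon V \to \{1,\dots,n\}$ is an $m$-distance clustered $n$-coloring of $G$ if there is a constant $K_\star > 0$ such that for every $i$, every connected component of the subgraph induced by $f^{-1}[\{i\}]$ has at most $K_\star$ vertices, and the distance in $G$ between any two distinct such components (of the same color $i$) is bigger than $m$. The $m$-distance clustered chromatic number $\chi_{\star,m}(G)$ is the least $n \in \mathbb{N}$ for which an $m$-distance clustered $n$-coloring of $G$ exists, and $\infty$ if none exists. If $\chi_{\star,m}(G)$ is finite, $\widehat{K}_{\star,m}(G)$ denotes the minimum constant $K_\star$ over all $m$-distance clustered $\chi_{\star,m}(G)$-colorings of $G$. $G_n^\infty$ is the graph with vertex set $\mathbb{Z}^n$ in which $x,y$ are adjacent iff $\|x-y\|_\infty = 1$ (so its graph distance is the $\ell^\infty$ distance). *)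

theory Defs
  imports Main "HOL-Library.Extended_Nat"
begin

definition is_walk :: "'a set \<Rightarrow> ('a \<Rightarrow> 'a \<Rightarrow> bool) \<Rightarrow> 'a \<Rightarrow> 'a \<Rightarrow> nat \<Rightarrow> bool" where
  "is_walk V E x y k \<longleftrightarrow>
     (\<exists>p :: nat \<Rightarrow> 'a. p 0 = x \<and> p k = y \<and> (\<forall>i\<le>k. p i \<in> V) \<and>
        (\<forall>i<k. E (p i) (p (Suc i))))"

text \<open>Graph (shortest path) distance; \<open>\<infinity>\<close> if there is no path.\<close>
definition gdist :: "'a set \<Rightarrow> ('a \<Rightarrow> 'a \<Rightarrow> bool) \<Rightarrow> 'a \<Rightarrow> 'a \<Rightarrow> enat" where
  "gdist V E x y = (INF k \<in> {k. is_walk V E x y k}. enat k)"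

definition setdist :: "'a set \<Rightarrow> ('a \<Rightarrow> 'a \<Rightarrow> bool) \<Rightarrow> 'a set \<Rightarrow> 'a set \<Rightarrow> enat" where
  "setdist V E A B = (INF p \<in> A \<times> B. gdist V E (fst p) (snd p))"

definition induced_comp :: "('a \<Rightarrow> 'a \<Rightarrow> bool) \<Rightarrow> 'a set \<Rightarrow> 'a \<Rightarrow> 'a set" where
  "induced_comp E S x = {y. (\<lambda>u v. u \<in> S \<and> v \<in> S \<and> E u v)\<^sup>*\<^sup>* x y}"

definition induced_components :: "('a \<Rightarrow> 'a \<Rightarrow> bool) \<Rightarrow> 'a set \<Rightarrow> 'a set set" where
  "induced_components E S = induced_comp E S ` S"

definition mdist_clustered_coloring ::
  "'a set \<Rightarrow> ('a \<Rightarrow> 'a \<Rightarrow> bool) \<Rightarrow> nat \<Rightarrow> nat \<Rightarrow> nat \<Rightarrow> ('a \<Rightarrow> nat) \<Rightarrow> bool" where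
  "mdist_clustered_coloring V E m N K f \<longleftrightarrow>
     K > 0 \<and> (\<forall>x\<in>V. f x \<in> {1..N}) \<and>
     (\<forall>i\<in>{1..N}. \<forall>C \<in> induced_components E {x\<in>V. f x = i}.
         finite C \<and> card C \<le> K) \<and>
     (\<forall>i\<in>{1..N}. \<forall>C \<in> induced_components E {x\<in>V. f x = i}.
         \<forall>D \<in> induced_components E {x\<in>V. f x = i}.
           C \<noteq> D \<longrightarrow> setdist V E C D > enat m)"

definition chi_star :: "'a set \<Rightarrow> ('a \<Rightarrow> 'a \<Rightarrow> bool) \<Rightarrow> nat \<Rightarrow> enat" where
  "chi_star V E m =
     (if \<exists>N K f. mdist_clustered_coloring V E m N K f
      then enat (LEAST N. \<exists>K f. mdist_clustered_coloring V E m N K f)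
      else \<infinity>)"

text \<open>Minimal clustering constant among colorings with chi_star colors
  (component sizes are integers, so the minimal constant is a natural number).\<close>
definition K_hat :: "'a set \<Rightarrow> ('a \<Rightarrow> 'a \<Rightarrow> bool) \<Rightarrow> nat \<Rightarrow> nat" where
  "K_hat V E m = (LEAST K. \<exists>f. mdist_clustered_coloring V E m (the_enat (chi_star V E m)) K f)"

text \<open>The graph G_n^\<infinity>: vertices Z^n, represented as functions nat \<Rightarrow> int vanishing
  outside {..<n}; adjacent iff the l-infinity distance is 1.\<close>
definition Zn :: "nat \<Rightarrow> (nat \<Rightarrow> int) set" where
  "Zn n = {x. \<forall>i\<ge>n. x i = 0}"

definition linf_dist :: "nat \<Rightarrow> (nat \<Rightarrow> int) \<Rightarrow> (nat \<Rightarrow> int) \<Rightarrow> int" where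
  "linf_dist n x y = Max (insert 0 ((\<lambda>i. \<bar>x i - y i\<bar>) ` {..<n}))"

definition Ginf_adj :: "nat \<Rightarrow> (nat \<Rightarrow> int) \<Rightarrow> (nat \<Rightarrow> int) \<Rightarrow> bool" where
  "Ginf_adj n x y \<longleftrightarrow> linf_dist n x y = 1"

end

theory Submission
  imports Defs "HOL-Analysis.Brouwer_Fixpoint"
begin

lemma linf_le:
  assumes "(k::int) \<ge> 0"
  shows "linf_dist n x y \<le> k \<longleftrightarrow> (\<forall>i<n. \<bar>x i - y i\<bar> \<le> k)"
  unfolding linf_dist_def using assms by (subst Max_le_iff) auto

lemma linf_ge0: "linf_dist n x y \<ge> 0"
  unfolding linf_dist_def by (rule Max_ge) auto

lemma adj_iff:
  "Ginf_adj n x y \<longleftrightarrow> (\<forall>i<n. \<bar>x i - y i\<bar> \<le> 1) \<and> (\<exists>i<n. x i \<noteq> y i)"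
proof -
  have "Ginf_adj n x y \<longleftrightarrow> linf_dist n x y \<le> 1 \<and> \<not> linf_dist n x y \<le> 0"
    unfolding Ginf_adj_def using linf_ge0[of n x y] by auto
  also have "\<dots> \<longleftrightarrow> (\<forall>i<n. \<bar>x i - y i\<bar> \<le> 1) \<and> \<not> (\<forall>i<n. \<bar>x i - y i\<bar> \<le> 0)"
    using linf_le[of 1 n x y] linf_le[of 0 n x y] by simp
  also have "\<dots> \<longleftrightarrow> (\<forall>i<n. \<bar>x i - y i\<bar> \<le> 1) \<and> (\<exists>i<n. x i \<noteq> y i)"
    by auto
  finally show ?thesis .
qed

lemma adj_sym: "Ginf_adj n x y \<Longrightarrow> Ginf_adj n y x"
  unfolding adj_iff by (auto simp: abs_minus_commute)

lemma walk_bound: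
  assumes "is_walk V (Ginf_adj n) a b k" "i < n"
  shows "\<bar>a i - b i\<bar> \<le> int k"
proof -
  obtain p where p: "p 0 = a" "p k = b" "\<forall>j<k. Ginf_adj n (p j) (p (Suc j))"
    using assms(1) unfolding is_walk_def by blast
  have "j \<le> k \<Longrightarrow> \<bar>p 0 i - p j i\<bar> \<le> int j" for j
  proof (induction j)
    case 0 then show ?case by simp
  next
    case (Suc j)
    then have "\<bar>p j i - p (Suc j) i\<bar> \<le> 1" using p(3) assms(2) unfolding adj_iff by auto
    with Suc show ?case by simp
  qed
  with p show ?thesis by auto
qed

lemma gdist_gt:
  assumes "i < n" "\<bar>a i - b i\<bar> > int m"
  shows "gdist V (Ginf_adj n) a b \<ge> enat (Suc m)"
  unfolding gdist_def
proof (rule INF_greatest)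
  fix k assume "k \<in> {k. is_walk V (Ginf_adj n) a b k}"
  then have "\<bar>a i - b i\<bar> \<le> int k" using walk_bound assms(1) by blast
  with assms(2) show "enat (Suc m) \<le> enat k" by simp
qed

lemma setdist_gt:
  assumes "\<And>a b. a \<in> C \<Longrightarrow> b \<in> D \<Longrightarrow> \<exists>i<n. \<bar>a i - b i\<bar> > int m"
  shows "Defs.setdist V (Ginf_adj n) C D > enat m"
proof -
  have "enat (Suc m) \<le> Defs.setdist V (Ginf_adj n) C D"
    unfolding Defs.setdist_def
  proof (rule INF_greatest)
    fix p assume "p \<in> C \<times> D"
    then obtain i where "i < n" "\<bar>fst p i - snd p i\<bar> > int m" using assms by force
    then show "enat (Suc m) \<le> gdist V (Ginf_adj n) (fst p) (snd p)" by (rule gdist_gt)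
  qed
  then show ?thesis by (simp add: Suc_ile_eq)
qed

definition Uf :: "nat \<Rightarrow> int \<Rightarrow> int \<Rightarrow> int" where
  "Uf k c T = T - ((T - c) mod int k)"

lemma Uf_props:
  assumes "k > 0"
  shows "Uf k c T \<le> T" "T < Uf k c T + int k" "(Uf k c T - c) mod int k = 0"
proof -
  show "Uf k c T \<le> T" using assms unfolding Uf_def by (simp add: pos_mod_sign)
  show "T < Uf k c T + int k" using assms unfolding Uf_def by (simp add: pos_mod_bound)
  have "Uf k c T - c = int k * ((T - c) div int k)"
    unfolding Uf_def using minus_mod_eq_mult_div[of "T - c" "int k"] by simp
  then show "(Uf k c T - c) mod int k = 0" by simp
qed

lemma Uf_char:
  assumes "k > 0" "u \<le> T" "T < u + int k" "(u - c) mod int k = 0"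
  shows "Uf k c T = u"
proof -
  have "(T - c) mod int k = ((T - u) + (u - c)) mod int k" by simp
  also have "\<dots> = ((T - u) mod int k + (u - c) mod int k) mod int k" by (rule mod_add_eq[symmetric])
  also have "\<dots> = (T - u) mod int k" using assms(4) by simp
  finally have "(T - c) mod int k = (T - u) mod int k" .
  also have "\<dots> = T - u" using assms by (intro mod_pos_pos_trivial) auto
  finally show ?thesis unfolding Uf_def by simp
qed

fun colr :: "nat \<Rightarrow> nat \<Rightarrow> (nat \<Rightarrow> int) \<Rightarrow> int" where
  "colr m 0 x = 0"
| "colr m (Suc d) x = Uf (Suc d) (colr m d x) (x d div int m) mod int (Suc (Suc d))"

fun keyr :: "nat \<Rightarrow> nat \<Rightarrow> (nat \<Rightarrow> int) \<Rightarrow> int list" where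
  "keyr m 0 x = []"
| "keyr m (Suc d) x = Uf (Suc d) (colr m d x) (x d div int m) # keyr m d x"

lemma colr_range: "0 \<le> colr m d x \<and> colr m d x \<le> int d"
proof (cases d)
  case (Suc e)
  define a where "a = Uf (Suc e) (colr m e x) (x e div int m)"
  define k :: int where "k = int (Suc (Suc e))"
  have c: "colr m d x = a mod k" using Suc a_def k_def by simp
  have "a mod k < k" "0 \<le> a mod k"
    by (rule pos_mod_bound pos_mod_sign, simp add: k_def)+
  moreover have "int d = k - 1" using Suc k_def by simp
  ultimately show ?thesis using c by simp
qed simp

lemma key_col: "keyr m d x = keyr m d y \<Longrightarrow> colr m d x = colr m d y"
  by (cases d) auto

lemma local_dep: "(\<forall>i<d. x i = y i) \<Longrightarrow> colr m d x = colr m d y \<and> keyr m d x = keyr m d y"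
  by (induction d) auto

lemma sep:
  assumes "m \<ge> 1"
  shows "colr m d x = colr m d y \<Longrightarrow> keyr m d x \<noteq> keyr m d y \<Longrightarrow> \<exists>i<d. \<bar>x i - y i\<bar> > int m"
proof (induction d)
  case 0 then show ?case by simp
next
  case (Suc d)
  define ux where "ux = Uf (Suc d) (colr m d x) (x d div int m)"
  define uy where "uy = Uf (Suc d) (colr m d y) (y d div int m)"
  have cx: "ux mod int (Suc (Suc d)) = uy mod int (Suc (Suc d))"
    using Suc.prems(1) by (simp add: ux_def uy_def)
  show ?case
  proof (cases "keyr m d x = keyr m d y \<or> colr m d x \<noteq> colr m d y")
    case False
    then obtain i where "i < d" "\<bar>x i - y i\<bar> > int m" using Suc.IH by blast
    then show ?thesis using less_SucI by blast
  next
    case True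
    have neq: "ux \<noteq> uy"
    proof
      assume eq: "ux = uy"
      show False
      proof (cases "keyr m d x = keyr m d y")
        case True
        then show False using Suc.prems(2) eq by (simp add: ux_def uy_def)
      next
        case False
        with True have "colr m d x \<noteq> colr m d y" by blast
        moreover have "(ux - colr m d x) mod int (Suc d) = 0" "(uy - colr m d y) mod int (Suc d) = 0"
          unfolding ux_def uy_def by (rule Uf_props(3), simp)+
        ultimately have "colr m d x mod int (Suc d) \<noteq> colr m d y mod int (Suc d)"
          using colr_range[of m d x] colr_range[of m d y] by (simp add: mod_pos_pos_trivial)
        moreover have "int (Suc d) dvd ux - colr m d x" "int (Suc d) dvd uy - colr m d y"
          using \<open>(ux - colr m d x) mod int (Suc d) = 0\<close> \<open>(uy - colr m d y) mod int (Suc d) = 0\<close>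
          by (simp_all add: dvd_eq_mod_eq_0)
        then have "int (Suc d) dvd (uy - colr m d y) - (ux - colr m d x)" by (rule dvd_diff[rotated])
        then have "int (Suc d) dvd colr m d x - colr m d y" using eq by simp
        ultimately show False by (simp add: mod_eq_dvd_iff)
      qed
    qed
    have dv: "int (Suc (Suc d)) dvd ux - uy" using cx by (simp add: mod_eq_dvd_iff)
    have far: "ux \<ge> uy + int (Suc (Suc d)) \<or> uy \<ge> ux + int (Suc (Suc d))"
    proof -
      obtain q where q: "ux - uy = int (Suc (Suc d)) * q" using dv by blast
      with neq have "q \<noteq> 0" by auto
      then have "q \<ge> 1 \<or> q \<le> -1" by auto
      then show ?thesis
      proof
        assume "q \<ge> 1"
        then have "int (Suc (Suc d)) * q \<ge> int (Suc (Suc d))" by simp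
        with q show ?thesis by linarith
      next
        assume "q \<le> -1"
        then have "int (Suc (Suc d)) * q \<le> - int (Suc (Suc d))"
          using mult_left_mono[of q "-1" "int (Suc (Suc d))"] by simp
        with q show ?thesis by linarith
      qed
    qed
    have bx: "ux \<le> x d div int m" "x d div int m < ux + int (Suc d)"
      unfolding ux_def by (rule Uf_props; simp)+
    have by': "uy \<le> y d div int m" "y d div int m < uy + int (Suc d)"
      unfolding uy_def by (rule Uf_props; simp)+
    have m0: "int m > 0" using assms by simp
    have key: "a div int m \<ge> b div int m + 2 \<Longrightarrow> a - b > int m" for a b :: int
    proof -
      assume h: "a div int m \<ge> b div int m + 2"
      have "a \<ge> int m * (a div int m)" using minus_mod_eq_mult_div[of a "int m"] pos_mod_sign[of "int m" a] m0 by linarith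
      moreover have "b < int m * (b div int m) + int m"
        using minus_mod_eq_mult_div[of b "int m"] pos_mod_bound[of "int m" b] m0 by linarith
      moreover have "int m * (a div int m) \<ge> int m * (b div int m + 2)"
        using h m0 by (simp add: mult_left_mono)
      ultimately show ?thesis by (simp add: algebra_simps)
    qed
    from far have "\<bar>x d - y d\<bar> > int m"
    proof
      assume "ux \<ge> uy + int (Suc (Suc d))"
      then have "x d div int m \<ge> y d div int m + 2" using bx by' by linarith
      then show ?thesis using key by fastforce
    next
      assume "uy \<ge> ux + int (Suc (Suc d))"
      then have "y d div int m \<ge> x d div int m + 2" using bx by' by linarith
      then show ?thesis using key by fastforce
    qed
    then show ?thesis by auto
  qed
qed

lemma key_ext:
  "d \<le> n \<Longrightarrow> keyr m d x = keyr m d y \<Longrightarrow> (\<forall>i. d \<le> i \<longrightarrow> i < n \<longrightarrow> x i = y i)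
   \<Longrightarrow> keyr m n x = keyr m n y"
proof (induction n)
  case 0 then show ?case by simp
next
  case (Suc n)
  show ?case
  proof (cases "d = Suc n")
    case True then show ?thesis using Suc.prems by simp
  next
    case False
    then have "d \<le> n" using Suc.prems by simp
    then have k: "keyr m n x = keyr m n y" using Suc by simp
    then have "colr m n x = colr m n y" by (rule key_col)
    moreover have "x n = y n" using Suc.prems \<open>d \<le> n\<close> by simp
    ultimately show ?thesis using k by simp
  qed
qed

lemma div_ge_imp: "(m::int) > 0 \<Longrightarrow> u \<le> t div m \<Longrightarrow> u * m \<le> t"
proof -
  assume m: "m > 0" and h: "u \<le> t div m"
  have "u * m \<le> (t div m) * m" using h m by (simp add: mult_right_mono)
  also have "\<dots> \<le> t" using minus_mod_eq_div_mult[of t m] pos_mod_sign[of m t] m by linarith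
  finally show ?thesis .
qed

lemma div_lt_imp: "(m::int) > 0 \<Longrightarrow> t div m < v \<Longrightarrow> t < v * m"
proof -
  assume m: "m > 0" and h: "t div m < v"
  have "t < (t div m) * m + m" using minus_mod_eq_div_mult[of t m] pos_mod_bound[of m t] m by linarith
  also have "(t div m) * m + m = (t div m + 1) * m" by (simp add: algebra_simps)
  also have "\<dots> \<le> v * m" using h m by (intro mult_right_mono) auto
  finally show ?thesis .
qed

lemma class_card:
  assumes "m \<ge> 1"
  shows "finite {y. (\<forall>i\<ge>d. y i = 0) \<and> keyr m d y = keyr m d x} \<and>
         card {y. (\<forall>i\<ge>d. y i = 0) \<and> keyr m d y = keyr m d x} \<le> fact d * m ^ d"
proof (induction d arbitrary: x)
  case 0
  have "{y::nat\<Rightarrow>int. (\<forall>i\<ge>0. y i = 0) \<and> keyr m 0 y = keyr m 0 x} = {\<lambda>_. 0}" by auto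
  then show ?case by simp
next
  case (Suc d)
  define A where "A = {y. (\<forall>i\<ge>d. y i = 0) \<and> keyr m d y = keyr m d x}"
  define u where "u = Uf (Suc d) (colr m d x) (x d div int m)"
  define I where "I = {u * int m ..< (u + int (Suc d)) * int m}"
  have m0: "int m > 0" using assms by simp
  have sub: "{y. (\<forall>i\<ge>Suc d. y i = 0) \<and> keyr m (Suc d) y = keyr m (Suc d) x}
        \<subseteq> (\<lambda>(y,t). y(d:=t)) ` (A \<times> I)"
  proof
    fix z assume "z \<in> {y. (\<forall>i\<ge>Suc d. y i = 0) \<and> keyr m (Suc d) y = keyr m (Suc d) x}"
    then have z0: "\<forall>i\<ge>Suc d. z i = 0" and zk: "keyr m (Suc d) z = keyr m (Suc d) x" by auto
    have kd: "keyr m d z = keyr m d x" and uz: "Uf (Suc d) (colr m d z) (z d div int m) = u"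
      using zk by (simp_all add: u_def)
    have "colr m d z = colr m d x" using kd by (rule key_col)
    then have uz': "Uf (Suc d) (colr m d x) (z d div int m) = u" using uz by simp
    have "keyr m d (z(d:=0)) = keyr m d z" using local_dep[of d "z(d:=0)" z m] by simp
    then have "z(d:=0) \<in> A" unfolding A_def using z0 kd
      by (auto simp: Suc_le_eq)
    moreover have "z d \<in> I"
    proof -
      have "u \<le> z d div int m" "z d div int m < u + int (Suc d)"
        using Uf_props(1,2)[where k="Suc d" and c="colr m d x" and T="z d div int m"] uz' by auto
      then show ?thesis unfolding I_def using div_ge_imp[OF m0] div_lt_imp[OF m0] by auto
    qed
    moreover have "z = (z(d:=0))(d := z d)" by simp
    ultimately show "z \<in> (\<lambda>(y,t). y(d:=t)) ` (A \<times> I)"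
      by (intro image_eqI[where x="(z(d:=0), z d)"]) auto
  qed
  have fA: "finite A" and cA: "card A \<le> fact d * m ^ d" using Suc.IH[of x] unfolding A_def by auto
  have fI: "finite I" unfolding I_def by simp
  have cI: "card I = Suc d * m" unfolding I_def
  proof -
    have e: "(u + int (Suc d)) * int m - u * int m = int (Suc d * m)" by (simp add: algebra_simps)
    have "card {u * int m..<(u + int (Suc d)) * int m} = nat ((u + int (Suc d)) * int m - u * int m)" by simp
    also have "\<dots> = Suc d * m" by (simp only: e nat_int)
    finally show "card {u * int m..<(u + int (Suc d)) * int m} = Suc d * m" .
  qed
  have fin: "finite ((\<lambda>(y,t). y(d:=t)) ` (A \<times> I))" using fA fI by simp
  have "card {y. (\<forall>i\<ge>Suc d. y i = 0) \<and> keyr m (Suc d) y = keyr m (Suc d) x}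
        \<le> card ((\<lambda>(y,t). y(d:=t)) ` (A \<times> I))" using sub fin by (rule card_mono[rotated])
  also have "\<dots> \<le> card (A \<times> I)" by (rule card_image_le) (use fA fI in simp)
  also have "\<dots> = card A * card I" by (simp add: card_cartesian_product)
  also have "\<dots> \<le> fact d * m ^ d * (Suc d * m)" using cA cI by simp
  also have "\<dots> = fact (Suc d) * m ^ Suc d" by (simp add: algebra_simps)
  finally show ?case using finite_subset[OF sub fin] by simp
qed

definition Wk :: "nat \<Rightarrow> nat \<Rightarrow> int list \<Rightarrow> (nat \<Rightarrow> int) \<Rightarrow> (nat \<Rightarrow> int) \<Rightarrow> bool" where
  "Wk n m k u v \<longleftrightarrow> u \<in> Zn n \<and> v \<in> Zn n \<and> Ginf_adj n u v \<and> keyr m n u = k \<and> keyr m n v = k"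

lemma line_walk:
  assumes "d < n" "y \<in> Zn n"
  shows "(\<forall>t. a \<le> t \<and> t \<le> a + int j \<longrightarrow> keyr m n (y(d:=t)) = k) \<Longrightarrow>
    (Wk n m k)\<^sup>*\<^sup>* (y(d:=a)) (y(d:=a + int j)) \<and> (Wk n m k)\<^sup>*\<^sup>* (y(d:=a + int j)) (y(d:=a))"
proof (induction j)
  case 0 then show ?case by simp
next
  case (Suc j)
  have "\<forall>t. a \<le> t \<and> t \<le> a + int j \<longrightarrow> keyr m n (y(d:=t)) = k"
  proof (intro allI impI)
    fix t assume "a \<le> t \<and> t \<le> a + int j"
    then have "a \<le> t \<and> t \<le> a + int (Suc j)" by simp
    then show "keyr m n (y(d:=t)) = k" using Suc.prems by blast
  qed
  note IH = Suc.IH[OF this]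
  have inZ: "y(d:=t) \<in> Zn n" for t using assms unfolding Zn_def by auto
  have adj: "Ginf_adj n (y(d:=a + int j)) (y(d:=a + int (Suc j)))"
    unfolding adj_iff using assms(1) by auto
  have "a \<le> a + int j \<and> a + int j \<le> a + int (Suc j)" "a \<le> a + int (Suc j) \<and> a + int (Suc j) \<le> a + int (Suc j)" by simp_all
  then have k1: "keyr m n (y(d:=a + int j)) = k" "keyr m n (y(d:=a + int (Suc j))) = k"
    using Suc.prems by blast+
  have w1: "Wk n m k (y(d:=a + int j)) (y(d:=a + int (Suc j)))"
    and w2: "Wk n m k (y(d:=a + int (Suc j))) (y(d:=a + int j))"
    unfolding Wk_def using inZ adj adj_sym[OF adj] k1 by auto
  show ?case using IH w1 w2 by (meson rtranclp.rtrancl_into_rtrancl converse_rtranclp_into_rtranclp)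
qed

lemma line_walk':
  assumes "d < n" "y \<in> Zn n" "a \<le> b" "\<forall>t. a \<le> t \<and> t \<le> b \<longrightarrow> keyr m n (y(d:=t)) = k"
  shows "(Wk n m k)\<^sup>*\<^sup>* (y(d:=a)) (y(d:=b)) \<and> (Wk n m k)\<^sup>*\<^sup>* (y(d:=b)) (y(d:=a))"
proof -
  have "b = a + int (nat (b - a))" using assms(3) by simp
  then show ?thesis using line_walk[OF assms(1,2), of a "nat (b - a)" m k] assms(4) by metis
qed

lemma connect:
  assumes "m \<ge> 1"
  shows "d \<le> n \<Longrightarrow> x \<in> Zn n \<Longrightarrow> y \<in> Zn n \<Longrightarrow> keyr m d x = keyr m d y \<Longrightarrow> (\<forall>i\<ge>d. x i = y i)
    \<Longrightarrow> (Wk n m (keyr m n x))\<^sup>*\<^sup>* x y"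
proof (induction d arbitrary: y)
  case 0
  then have "x = y" by auto
  then show ?case by simp
next
  case (Suc d)
  have dn: "d < n" using Suc.prems by simp
  define z where "z = y(d := x d)"
  have zZ: "z \<in> Zn n" using Suc.prems(3) dn unfolding z_def Zn_def by auto
  have kdy: "keyr m d z = keyr m d y" using local_dep[of d z y m] unfolding z_def by simp
  have kx: "keyr m d x = keyr m d y" and ux: "Uf (Suc d) (colr m d x) (x d div int m) = Uf (Suc d) (colr m d y) (y d div int m)"
    using Suc.prems(4) by simp_all
  have agree: "\<forall>i\<ge>d. x i = z i" using Suc.prems(5) unfolding z_def
    by (metis Suc_le_eq fun_upd_apply le_neq_implies_less)
  have IH: "(Wk n m (keyr m n x))\<^sup>*\<^sup>* x z"
    using Suc.IH[of z] dn Suc.prems(2) zZ kdy kx agree by simp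
  have cxy: "colr m d x = colr m d y" using kx by (rule key_col)
  define u where "u = Uf (Suc d) (colr m d y) (y d div int m)"
  have m0: "int m > 0" using assms by simp
  have bnd: "u \<le> x d div int m" "x d div int m < u + int (Suc d)"
            "u \<le> y d div int m" "y d div int m < u + int (Suc d)"
    using Uf_props(1,2)[where k="Suc d" and c="colr m d y" and T="x d div int m"]
          Uf_props(1,2)[where k="Suc d" and c="colr m d y" and T="y d div int m"] ux cxy unfolding u_def by auto
  have kn: "keyr m n y = keyr m n x"
    using key_ext[of "Suc d" n m y x] Suc.prems by simp
  have kt: "keyr m n (y(d:=t)) = keyr m n x" if "min (x d) (y d) \<le> t" "t \<le> max (x d) (y d)" for t
  proof -
    have "min (x d) (y d) div int m \<le> t div int m" "t div int m \<le> max (x d) (y d) div int m"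
      using that m0 by (simp_all add: zdiv_mono1)
    then have "u \<le> t div int m" "t div int m < u + int (Suc d)" using bnd
      by (simp_all add: min_def max_def split: if_splits)
    moreover have "(u - colr m d y) mod int (Suc d) = 0"
      unfolding u_def by (rule Uf_props(3)) simp
    ultimately have "Uf (Suc d) (colr m d y) (t div int m) = u" by (intro Uf_char) auto
    moreover have "colr m d (y(d:=t)) = colr m d y \<and> keyr m d (y(d:=t)) = keyr m d y"
      by (rule local_dep) simp
    ultimately have "keyr m (Suc d) (y(d:=t)) = keyr m (Suc d) y" by (simp add: u_def)
    then have "keyr m n (y(d:=t)) = keyr m n y"
      using key_ext[of "Suc d" n m "y(d:=t)" y] Suc.prems(1) by simp
    then show ?thesis using kn by simp
  qed
  have line: "(Wk n m (keyr m n x))\<^sup>*\<^sup>* z y"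
  proof (cases "x d \<le> y d")
    case True
    have "(Wk n m (keyr m n x))\<^sup>*\<^sup>* (y(d:=x d)) (y(d:=y d))"
      using line_walk'[OF dn Suc.prems(3) True, of m "keyr m n x"] kt True by auto
    then show ?thesis unfolding z_def by simp
  next
    case False
    then have F: "y d \<le> x d" by simp
    have "(Wk n m (keyr m n x))\<^sup>*\<^sup>* (y(d:=x d)) (y(d:=y d))"
      using line_walk'[OF dn Suc.prems(3) F, of m "keyr m n x"] kt F by auto
    then show ?thesis unfolding z_def by simp
  qed
  show ?case using IH line by (rule rtranclp_trans)
qed

definition fc :: "nat \<Rightarrow> nat \<Rightarrow> (nat \<Rightarrow> int) \<Rightarrow> nat" where
  "fc m n x = nat (colr m n x) + 1"

lemma fc_eq_iff: "fc m n x = fc m n y \<longleftrightarrow> colr m n x = colr m n y"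
  unfolding fc_def using colr_range[of m n x] colr_range[of m n y] by auto

lemma rtp_mono: assumes "\<And>u v. P u v \<Longrightarrow> Q u v" "P\<^sup>*\<^sup>* a b" shows "Q\<^sup>*\<^sup>* a b"
  using assms(2) by induction (auto intro: rtranclp.rtrancl_into_rtrancl assms(1))

lemma comp_eq:
  assumes "m \<ge> 1" "x \<in> Zn n"
  shows "induced_comp (Ginf_adj n) {z \<in> Zn n. fc m n z = fc m n x} x = {y \<in> Zn n. keyr m n y = keyr m n x}"
    (is "induced_comp _ ?S x = ?C")
proof
  show "induced_comp (Ginf_adj n) ?S x \<subseteq> ?C"
  proof
    fix y assume "y \<in> induced_comp (Ginf_adj n) ?S x"
    then have "(\<lambda>u v. u \<in> ?S \<and> v \<in> ?S \<and> Ginf_adj n u v)\<^sup>*\<^sup>* x y" unfolding induced_comp_def by simp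
    then show "y \<in> ?C"
    proof (induction rule: rtranclp_induct)
      case base then show ?case using assms by simp
    next
      case (step y z)
      have yz: "y \<in> ?S" "z \<in> ?S" "Ginf_adj n y z" using step.hyps(2) by auto
      have ky: "keyr m n y = keyr m n x" using step.IH by auto
      have "fc m n y = fc m n z" using yz(1,2) by simp
      then have "colr m n y = colr m n z" by (simp only: fc_eq_iff)
      moreover have bd: "\<bar>y i - z i\<bar> \<le> int m" if "i < n" for i
      proof -
        have "\<bar>y i - z i\<bar> \<le> 1" using yz(3) that unfolding adj_iff by blast
        then show ?thesis using assms(1) by linarith
      qed
      ultimately have "keyr m n y = keyr m n z"
      proof (rule_tac ccontr)
        assume "keyr m n y \<noteq> keyr m n z" "colr m n y = colr m n z"
        then obtain i where "i < n" "int m < \<bar>y i - z i\<bar>" using sep[OF assms(1), of n y z] by blast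
        then show False using bd[of i] by linarith
      qed
      then show ?case using ky yz by simp
    qed
  qed
next
  show "?C \<subseteq> induced_comp (Ginf_adj n) ?S x"
  proof
    fix y assume y: "y \<in> ?C"
    have yZ: "y \<in> Zn n" and yk: "keyr m n x = keyr m n y" using y by auto
    have ag: "\<forall>i\<ge>n. x i = y i" using yZ assms(2) unfolding Zn_def by simp
    have W: "(Wk n m (keyr m n x))\<^sup>*\<^sup>* x y" by (rule connect[OF assms(1) le_refl assms(2) yZ yk ag])
    have st: "u \<in> ?S \<and> v \<in> ?S \<and> Ginf_adj n u v" if "Wk n m (keyr m n x) u v" for u v
    proof -
      have w: "u \<in> Zn n" "v \<in> Zn n" "Ginf_adj n u v" "keyr m n u = keyr m n x" "keyr m n v = keyr m n x"
        using that unfolding Wk_def by auto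
      have f1: "fc m n u = fc m n x" and f2: "fc m n v = fc m n x"
        using key_col[OF w(4)] key_col[OF w(5)] by (simp_all only: fc_eq_iff)
      show ?thesis using w f1 f2 by blast
    qed
    have "(\<lambda>u v. u \<in> ?S \<and> v \<in> ?S \<and> Ginf_adj n u v)\<^sup>*\<^sup>* x y"
      by (rule rtp_mono[OF _ W]) (rule st)
    then show "y \<in> induced_comp (Ginf_adj n) ?S x" unfolding induced_comp_def by simp
  qed
qed

lemma construction:
  assumes "m \<ge> 1"
  shows "mdist_clustered_coloring (Zn n) (Ginf_adj n) m (n + 1) (fact n * m ^ n) (fc m n)"
  unfolding mdist_clustered_coloring_def
proof (intro conjI ballI impI)
  show "0 < fact n * m ^ n" using assms by simp
next
  fix x assume "x \<in> Zn n"
  show "fc m n x \<in> {1..n+1}" unfolding fc_def using colr_range[of m n x] by auto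
next
  fix i C assume "i \<in> {1..n+1}" "C \<in> induced_components (Ginf_adj n) {x \<in> Zn n. fc m n x = i}"
  then obtain x where x: "x \<in> Zn n" "fc m n x = i" "C = induced_comp (Ginf_adj n) {x \<in> Zn n. fc m n x = i} x"
    unfolding induced_components_def by auto
  then have "C = {y \<in> Zn n. keyr m n y = keyr m n x}" using comp_eq[OF assms x(1)] by simp
  also have "\<dots> = {y. (\<forall>i\<ge>n. y i = 0) \<and> keyr m n y = keyr m n x}" unfolding Zn_def by auto
  finally have "C = {y. (\<forall>i\<ge>n. y i = 0) \<and> keyr m n y = keyr m n x}" .
  then show "finite C" "card C \<le> fact n * m ^ n" using class_card[OF assms, of n x] by auto
next
  fix i C D assume "i \<in> {1..n+1}" "C \<in> induced_components (Ginf_adj n) {x \<in> Zn n. fc m n x = i}"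
     "D \<in> induced_components (Ginf_adj n) {x \<in> Zn n. fc m n x = i}" "C \<noteq> D"
  then obtain x y where x: "x \<in> Zn n" "fc m n x = i" "C = induced_comp (Ginf_adj n) {x \<in> Zn n. fc m n x = i} x"
    and y: "y \<in> Zn n" "fc m n y = i" "D = induced_comp (Ginf_adj n) {x \<in> Zn n. fc m n x = i} y"
    unfolding induced_components_def by auto
  have C: "C = {z \<in> Zn n. keyr m n z = keyr m n x}" using comp_eq[OF assms x(1)] x by simp
  have D: "D = {z \<in> Zn n. keyr m n z = keyr m n y}" using comp_eq[OF assms y(1)] x y by simp
  have cxy: "colr m n x = colr m n y" using x(2) y(2) by (simp add: fc_eq_iff[symmetric])
  show "enat m < Defs.setdist (Zn n) (Ginf_adj n) C D"
  proof (rule setdist_gt)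
    fix a b assume a: "a \<in> C" and b: "b \<in> D"
    have "keyr m n a = keyr m n x" "keyr m n b = keyr m n y" using a b C D by auto
    moreover have "keyr m n x \<noteq> keyr m n y" using C D \<open>C \<noteq> D\<close> by auto
    ultimately have "keyr m n a \<noteq> keyr m n b" "colr m n a = colr m n b"
      using key_col[of m n a x] key_col[of m n b y] cxy by auto
    then show "\<exists>i<n. int m < \<bar>a i - b i\<bar>" using sep[OF assms, of n a b] by auto
  qed
qed

definition gv :: "nat \<Rightarrow> (nat \<Rightarrow> nat) \<Rightarrow> (nat \<Rightarrow> int)" where
  "gv n x = (\<lambda>i. if i < n then int (x i) else 0)"

definition Rc :: "nat \<Rightarrow> ((nat \<Rightarrow> int) \<Rightarrow> nat) \<Rightarrow> nat \<Rightarrow> (nat \<Rightarrow> int) \<Rightarrow> (nat \<Rightarrow> int) \<Rightarrow> bool" where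
  "Rc n f j = (\<lambda>u v. u \<in> {x \<in> Zn n. f x = Suc j} \<and> v \<in> {x \<in> Zn n. f x = Suc j} \<and> Ginf_adj n u v)"

definition reachc :: "nat \<Rightarrow> ((nat \<Rightarrow> int) \<Rightarrow> nat) \<Rightarrow> nat \<Rightarrow> nat \<Rightarrow> (nat \<Rightarrow> int) \<Rightarrow> bool" where
  "reachc n f p j z \<longleftrightarrow> (\<exists>y. (Rc n f j)\<^sup>*\<^sup>* z y \<and> int p - 1 \<le> y j)"

definition labc :: "nat \<Rightarrow> ((nat \<Rightarrow> int) \<Rightarrow> nat) \<Rightarrow> nat \<Rightarrow> (nat \<Rightarrow> nat) \<Rightarrow> nat \<Rightarrow> nat" where
  "labc n f p x j = (if x j = p \<or> (f (gv n x) = Suc j \<and> reachc n f p j (gv n x)) then 1 else 0)"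

lemma gv_Zn: "gv n x \<in> Zn n" unfolding gv_def Zn_def by auto

lemma ivt:
  assumes "R\<^sup>*\<^sup>* a b" "\<And>u v. R u v \<Longrightarrow> \<bar>u j - v j\<bar> \<le> (1::int)"
  shows "a j \<le> t \<longrightarrow> t \<le> b j \<longrightarrow> (\<exists>z. R\<^sup>*\<^sup>* a z \<and> z j = t)"
  using assms(1)
proof (induction rule: rtranclp_induct)
  case base then show ?case by auto
next
  case (step y z)
  show ?case
  proof (intro impI)
    assume t: "a j \<le> t" "t \<le> z j"
    show "\<exists>z. R\<^sup>*\<^sup>* a z \<and> z j = t"
    proof (cases "t \<le> y j")
      case True then show ?thesis using step.IH t by blast
    next
      case False
      have "\<bar>y j - z j\<bar> \<le> 1" using assms(2) step.hyps(2) by blast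
      then have "t = z j" using False t by linarith
      have "R\<^sup>*\<^sup>* a z" using step.hyps by (metis rtranclp.rtrancl_into_rtrancl)
      then show ?thesis using \<open>t = z j\<close> by blast
    qed
  qed
qed

lemma comp_big:
  assumes col: "mdist_clustered_coloring (Zn n) (Ginf_adj n) m N K f"
    and j: "j < n" and p: "K < p"
    and z0: "z0 \<in> Zn n" "f z0 = Suc j" "z0 j = 0"
    and rc: "reachc n f p j z0"
  shows False
proof -
  note d = col[unfolded mdist_clustered_coloring_def]
  have fV: "\<forall>x\<in>Zn n. f x \<in> {1..N}" using d[THEN conjunct2, THEN conjunct1] .
  have cl: "\<forall>i\<in>{1..N}. \<forall>C \<in> induced_components (Ginf_adj n) {x\<in>Zn n. f x = i}. finite C \<and> card C \<le> K"
    using d[THEN conjunct2, THEN conjunct2, THEN conjunct1] .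
  have "f z0 \<in> {1..N}" using fV z0(1) by blast
  then have jN: "Suc j \<in> {1..N}" using z0(2) by simp
  define C where "C = induced_comp (Ginf_adj n) {x\<in>Zn n. f x = Suc j} z0"
  have Cm: "C \<in> induced_components (Ginf_adj n) {x\<in>Zn n. f x = Suc j}"
    unfolding C_def induced_components_def using z0(1,2) by (intro imageI) simp
  have "finite C \<and> card C \<le> K" using bspec[OF bspec[OF cl jN] Cm] .
  then have fC: "finite C" and cC: "card C \<le> K" by simp_all
  obtain y where y: "(Rc n f j)\<^sup>*\<^sup>* z0 y" "int p - 1 \<le> y j" using rc unfolding reachc_def by blast
  have step1: "\<bar>u j - v j\<bar> \<le> 1" if "Rc n f j u v" for u v
  proof -
    have "Ginf_adj n u v" using that unfolding Rc_def by simp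
    then show ?thesis using j unfolding adj_iff by blast
  qed
  have sub: "{0..int p - 1} \<subseteq> (\<lambda>z. z j) ` C"
  proof
    fix t assume t: "t \<in> {0..int p - 1}"
    have "z0 j \<le> t" "t \<le> y j" using t z0(3) y(2) by auto
    moreover have "z0 j \<le> t \<longrightarrow> t \<le> y j \<longrightarrow> (\<exists>z. (Rc n f j)\<^sup>*\<^sup>* z0 z \<and> z j = t)"
      by (rule ivt[OF y(1)]) (erule step1)
    ultimately obtain z where "(Rc n f j)\<^sup>*\<^sup>* z0 z" "z j = t" by blast
    then have "z \<in> C" unfolding C_def induced_comp_def Rc_def by simp
    then show "t \<in> (\<lambda>z. z j) ` C" using \<open>z j = t\<close> by blast
  qed
  have "p = card {0..int p - 1}" by simp
  also have "\<dots> \<le> card ((\<lambda>z. z j) ` C)" using sub fC by (intro card_mono) auto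
  also have "\<dots> \<le> card C" using fC by (rule card_image_le)
  finally show False using cC p by simp
qed

lemma lower:
  assumes "N \<le> n"
  shows "\<not> mdist_clustered_coloring (Zn n) (Ginf_adj n) m N K f"
proof
  assume col: "mdist_clustered_coloring (Zn n) (Ginf_adj n) m N K f"
  have fV: "\<forall>x\<in>Zn n. f x \<in> {1..N}" using col[unfolded mdist_clustered_coloring_def, THEN conjunct2, THEN conjunct1] .
  define p where "p = K + 2"
  define lab where "lab = labc n f p"
  have p0: "0 < p" unfolding p_def by simp
  have l0: "\<forall>x j. (\<forall>j. x j \<le> p) \<and> j < n \<and> x j = 0 \<longrightarrow> lab x j = 0"
  proof (intro allI impI)
    fix x j assume h: "(\<forall>j. x j \<le> p) \<and> j < n \<and> x j = 0"
    show "lab x j = 0"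
    proof (rule ccontr)
      assume "lab x j \<noteq> 0"
      then have "f (gv n x) = Suc j" "reachc n f p j (gv n x)"
        using h unfolding lab_def labc_def p_def by (auto split: if_splits)
      moreover have "gv n x j = 0" using h unfolding gv_def by simp
      ultimately show False using comp_big[OF col, of j p "gv n x"] h gv_Zn unfolding p_def by auto
    qed
  qed
  have l1: "\<forall>x j. (\<forall>j. x j \<le> p) \<and> j < n \<and> x j = p \<longrightarrow> lab x j = 1"
    unfolding lab_def labc_def by auto
  have "odd (card {s. ksimplex p n s \<and> (reduced n \<circ> lab) ` s = {..n}})"
    by (rule kuhn_combinatorial[OF p0 l0 l1])
  then have "{s. ksimplex p n s \<and> (reduced n \<circ> lab) ` s = {..n}} \<noteq> {}"
    by (rule odd_card_imp_not_empty)
  then obtain s where ks: "ksimplex p n s" and rl: "(reduced n \<circ> lab) ` s = {..n}" by auto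
  from ks obtain b u where kus: "kuhn_simplex p n b u s" by (auto elim: ksimplex.cases)
  have bnd: "b i \<le> a i" "a i \<le> Suc (b i)" if "a \<in> s" for a i
    using kuhn_simplex.base_le[OF kus that] kuhn_simplex.le_Suc_base[OF kus that] by auto
  have outp: "a i = p" if "a \<in> s" "n \<le> i" for a i
    using kuhn_simplex.out_eq_p[OF kus that] .
  have "n \<in> (reduced n \<circ> lab) ` s" using rl by simp
  then obtain vn where vn: "vn \<in> s" "reduced n (lab vn) = n" by auto
  define c where "c = f (gv n vn) - 1"
  have fvn: "f (gv n vn) \<in> {1..N}" using fV gv_Zn by blast
  then have cn: "c < n" and fc': "f (gv n vn) = Suc c" unfolding c_def using assms by auto
  have "c \<in> (reduced n \<circ> lab) ` s" using rl cn by simp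
  then obtain vc where vc: "vc \<in> s" "reduced n (lab vc) = c" by auto
  have lvn: "lab vn c = 0" using reduced_labelling(2)[of n "lab vn"] vn cn by simp
  have lvc: "lab vc c \<noteq> 0" using reduced_labelling(3)[of n "lab vc"] vc cn by simp
  have nreach: "\<not> reachc n f p c (gv n vn)" using lvn fc' unfolding lab_def labc_def by (auto split: if_splits)
  from lvc have "vc c = p \<or> (f (gv n vc) = Suc c \<and> reachc n f p c (gv n vc))"
    unfolding lab_def labc_def by (auto split: if_splits)
  then show False
  proof
    assume "vc c = p"
    then have "p \<le> Suc (vn c)" using bnd[OF vc(1), of c] bnd[OF vn(1), of c] by simp
    then have "int p - 1 \<le> gv n vn c" unfolding gv_def using cn by simp
    then have "reachc n f p c (gv n vn)" unfolding reachc_def by blast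
    with nreach show False by simp
  next
    assume h: "f (gv n vc) = Suc c \<and> reachc n f p c (gv n vc)"
    then obtain y where y: "(Rc n f c)\<^sup>*\<^sup>* (gv n vc) y" "int p - 1 \<le> y c" unfolding reachc_def by blast
    have "vn \<noteq> vc" using vn vc cn by auto
    then obtain i where i: "vn i \<noteq> vc i" by auto
    have "i < n"
    proof (rule ccontr)
      assume "\<not> i < n"
      then have "n \<le> i" by simp
      then show False using i outp[OF vn(1), of i] outp[OF vc(1), of i] by simp
    qed
    have adj: "Ginf_adj n (gv n vn) (gv n vc)"
      unfolding adj_iff
    proof
      show "\<forall>i<n. \<bar>gv n vn i - gv n vc i\<bar> \<le> 1"
      proof (intro allI impI)
        fix i assume "i < n"
        have "b i \<le> vn i" "vn i \<le> Suc (b i)" "b i \<le> vc i" "vc i \<le> Suc (b i)"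
          using bnd[OF vn(1)] bnd[OF vc(1)] by auto
        then show "\<bar>gv n vn i - gv n vc i\<bar> \<le> 1" unfolding gv_def using \<open>i < n\<close> by simp
      qed
      show "\<exists>i<n. gv n vn i \<noteq> gv n vc i" using i \<open>i < n\<close> unfolding gv_def by auto
    qed
    have "Rc n f c (gv n vn) (gv n vc)" unfolding Rc_def using adj gv_Zn fc' h by auto
    then have "(Rc n f c)\<^sup>*\<^sup>* (gv n vn) y" using y(1) by (metis converse_rtranclp_into_rtranclp)
    then have "reachc n f p c (gv n vn)" using y(2) unfolding reachc_def by blast
    with nreach show False by simp
  qed
qed

theorem proposition3p4:
  fixes n m :: nat
  assumes "n \<ge> 1" and "m \<ge> 1"
  shows "chi_star (Zn n) (Ginf_adj n) m = enat (n + 1) \<and>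
         K_hat (Zn n) (Ginf_adj n) m \<le> fact n * m ^ n"
proof -
  have con: "mdist_clustered_coloring (Zn n) (Ginf_adj n) m (n + 1) (fact n * m ^ n) (fc m n)"
    by (rule construction[OF assms(2)])
  have L: "(LEAST N. \<exists>K f. mdist_clustered_coloring (Zn n) (Ginf_adj n) m N K f) = n + 1"
  proof (rule Least_equality)
    show "\<exists>K f. mdist_clustered_coloring (Zn n) (Ginf_adj n) m (n + 1) K f" using con by blast
  next
    fix N assume "\<exists>K f. mdist_clustered_coloring (Zn n) (Ginf_adj n) m N K f"
    then show "n + 1 \<le> N" by (cases "N \<le> n") (use lower[of N n m] in auto)
  qed
  have chi: "chi_star (Zn n) (Ginf_adj n) m = enat (n + 1)"
    unfolding chi_star_def using con L by auto
  have "K_hat (Zn n) (Ginf_adj n) m = (LEAST K. \<exists>f. mdist_clustered_coloring (Zn n) (Ginf_adj n) m (n + 1) K f)"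
    unfolding K_hat_def chi by simp
  also have "\<dots> \<le> fact n * m ^ n" using con by (intro Least_le) blast
  finally show ?thesis using chi by simp
qed

end
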